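(* For every $l\in\mathbb{N}$ and every $a_1,\dots,a_l\in\mathbb{Q}^*$ there exists $d\in\mathbb{Q}^*$ such that $F_d(\mathbb{Q})\not\subseteq\Omega_d$ and $da_j\notin(\mathbb{Q}^* )^2$ for all $j=1,\dots,l$.
   Context: For $d\in\mathbb{Q}^*$, $F_d\subset\mathbb{P}^3_{\mathbb{Q}}$ is the surface $x^4+d^2y^4-d^2z^4-w^4=0$, and $\Omega_d=\{[x:y:z:w]: xyzw=0\}\cup L_d$, where $L_d$ is the union of the $48$ lines (over $\overline{\mathbb{Q}}$) contained in $F_d$. *)

theory Defs
  imports Complex_Main "HOL-Computational_Algebra.Polynomial"
begin

text \<open>Points of affine 4-space (homogeneous coordinates (x,y,z,w) of P^3).\<close>
type_synonym 'a pt4 = "'a \<times> 'a \<times> 'a \<times> 'a"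

definition Fform :: "'a::comm_ring_1 \<Rightarrow> 'a pt4 \<Rightarrow> 'a" where
  "Fform d p = (case p of (x, y, z, w) \<Rightarrow> x^4 + d^2 * y^4 - d^2 * z^4 - w^4)"

definition lincomb4 :: "'a::comm_ring_1 \<Rightarrow> 'a pt4 \<Rightarrow> 'a \<Rightarrow> 'a pt4 \<Rightarrow> 'a pt4" where
  "lincomb4 a u b v = (case u of (u1, u2, u3, u4) \<Rightarrow> case v of (v1, v2, v3, v4) \<Rightarrow>
      (a*u1 + b*v1, a*u2 + b*v2, a*u3 + b*v3, a*u4 + b*v4))"

definition cpt :: "rat pt4 \<Rightarrow> complex pt4" where
  "cpt p = (case p of (x, y, z, w) \<Rightarrow> (of_rat x, of_rat y, of_rat z, of_rat w))"

definition F_rat :: "rat \<Rightarrow> rat pt4 set" where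
  "F_rat d = {p. p \<noteq> (0,0,0,0) \<and> Fform d p = 0}"

text \<open>A line of P^3 over the algebraic closure of Q (realised as the algebraic complex
  numbers) is spanned by two linearly independent vectors u, v with algebraic coordinates;
  it is contained in F_d iff the form vanishes on all of span(u,v).\<close>
definition alg_pt :: "complex pt4 \<Rightarrow> bool" where
  "alg_pt p = (case p of (x, y, z, w) \<Rightarrow> algebraic x \<and> algebraic y \<and> algebraic z \<and> algebraic w)"

definition line_in_F :: "rat \<Rightarrow> complex pt4 \<Rightarrow> complex pt4 \<Rightarrow> bool" where
  "line_in_F d u v \<longleftrightarrow> alg_pt u \<and> alg_pt v \<and>
     (\<forall>a b. lincomb4 a u b v = (0,0,0,0) \<longrightarrow> a = 0 \<and> b = 0) \<and>
     (\<forall>a b. Fform (of_rat d) (lincomb4 a u b v) = 0)"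

text \<open>The exceptional set Omega_d, as a set of (nonzero) rational representatives:
  coordinate hyperplanes xyzw = 0 together with the union L_d of all lines in F_d over Qbar.\<close>
definition Omega_rat :: "rat \<Rightarrow> rat pt4 set" where
  "Omega_rat d = {p. p \<noteq> (0,0,0,0) \<and>
      ((case p of (x, y, z, w) \<Rightarrow> x*y*z*w = 0) \<or>
       (\<exists>u v. line_in_F d u v \<and> (\<exists>a b. cpt p = lincomb4 a u b v)))}"

end

theory Submission
  imports Defs "HOL-Computational_Algebra.Primes"
begin

lemma key:
  fixes A B C r1 r2 r3 :: complex
  assumes e1: "A*r1 + B*r2 - C*r3 = 0"
    and e2: "A*r1^2 + B*r2^2 - C*r3^2 = 0"
    and e3: "A*r1^3 + B*r2^3 - C*r3^3 = 0"
    and AC: "A \<noteq> C" and BC: "B \<noteq> C" and AB: "A + B \<noteq> 0" and ABC: "A + B \<noteq> C"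
    and A0: "A \<noteq> 0" and B0: "B \<noteq> 0" and C0: "C \<noteq> 0"
  shows "r1 = 0 \<and> r2 = 0 \<and> r3 = 0"
proof -
  have "A*r1*(r1-r2)*(r1-r3) = (A*r1^3 + B*r2^3 - C*r3^3) - (r2+r3)*(A*r1^2 + B*r2^2 - C*r3^2) + r2*r3*(A*r1 + B*r2 - C*r3)"
    by (simp add: algebra_simps power2_eq_square power3_eq_cube)
  then have k1: "A*r1*(r1-r2)*(r1-r3) = 0" using e1 e2 e3 by simp
  have r1: "r1 = 0"
  proof (rule ccontr)
    assume n: "r1 \<noteq> 0"
    with k1 A0 have "r1 = r2 \<or> r1 = r3" by auto
    then show False
    proof
      assume h: "r1 = r2"
      have f1: "(A+B)*r1 = C*r3" using e1 h by (simp add: algebra_simps)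
      have f2: "(A+B)*r1^2 = C*r3^2" using e2 h by (simp add: algebra_simps)
      have "C*r3*(r3 - r1) = 0"
      proof -
        have "C*r3*(r3-r1) = C*r3^2 - r1*(C*r3)" by (simp add: algebra_simps power2_eq_square)
        also have "\<dots> = (A+B)*r1^2 - r1*((A+B)*r1)" using f1 f2 by simp
        also have "\<dots> = 0" by (simp add: algebra_simps power2_eq_square)
        finally show ?thesis .
      qed
      then have "r3 = 0 \<or> r3 = r1" using C0 by auto
      then show False
      proof
        assume "r3 = 0" then show False using f1 AB n by simp
      next
        assume "r3 = r1" then have "(A+B-C)*r1 = 0" using f1 by (simp add: algebra_simps)
        then show False using ABC n by simp
      qed
    next
      assume h: "r1 = r3"
      have f1: "(A-C)*r1 = - (B*r2)" using e1 h by (simp add: algebra_simps)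
      have f2: "(A-C)*r1^2 = - (B*r2^2)" using e2 h by (simp add: algebra_simps)
      have "B*r2*(r2 - r1) = 0"
      proof -
        have "B*r2*(r2-r1) = B*r2^2 + r1*(-(B*r2))" by (simp add: algebra_simps power2_eq_square)
        also have "\<dots> = - ((A-C)*r1^2) + r1*((A-C)*r1)" using f1 f2 by simp
        also have "\<dots> = 0" by (simp add: algebra_simps power2_eq_square)
        finally show ?thesis .
      qed
      then have "r2 = 0 \<or> r2 = r1" using B0 by auto
      then show False
      proof
        assume "r2 = 0" then have "(A-C)*r1 = 0" using f1 by simp
        then show False using AC n by simp
      next
        assume "r2 = r1" then have "(A+B-C)*r1 = 0" using f1 by (simp add: algebra_simps)
        then show False using ABC n by simp
      qed
    qed
  qed
  have f1: "B*r2 = C*r3" using e1 r1 by simp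
  have f2: "B*r2^2 = C*r3^2" using e2 r1 by simp
  have "B*r2*(r2 - r3) = 0"
  proof -
    have "B*r2*(r2-r3) = B*r2^2 - r3*(B*r2)" by (simp add: algebra_simps power2_eq_square)
    also have "\<dots> = C*r3^2 - r3*(C*r3)" using f1 f2 by simp
    also have "\<dots> = 0" by (simp add: algebra_simps power2_eq_square)
    finally show ?thesis .
  qed
  then have "r2 = 0 \<or> r2 = r3" using B0 by auto
  then have r2: "r2 = 0"
  proof
    assume "r2 = r3" then have "(B - C)*r2 = 0" using f1 by (simp add: algebra_simps)
    then show "r2 = 0" using BC by simp
  qed
  then have "r3 = 0" using f1 C0 by simp
  with r1 r2 show ?thesis by simp
qed

lemma pow4_expand: "(x + s*q)^4 = x^4 + 4*s*(x^3*q) + 6*s^2*(x^2*q^2) + 4*s^3*(x*q^3) + s^4*q^4"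
  for x s q :: complex
  by (simp add: algebra_simps power2_eq_square power3_eq_cube power4_eq_xxxx)

lemma core:
  fixes x y z w D q1 q2 q3 :: complex
  assumes x0: "x \<noteq> 0" and y0: "y \<noteq> 0" and z0: "z \<noteq> 0" and D0: "D \<noteq> 0"
    and AC: "x^4 \<noteq> D*z^4" and BC: "y^4 \<noteq> z^4" and AB: "x^4 + D*y^4 \<noteq> 0"
    and ABC: "x^4 + D*y^4 \<noteq> D*z^4"
    and F0: "x^4 + D*y^4 - D*z^4 - w^4 = 0"
    and Fs: "\<And>s. (x+s*q1)^4 + D*(y+s*q2)^4 - D*(z+s*q3)^4 - w^4 = 0"
  shows "q1 = 0 \<and> q2 = 0 \<and> q3 = 0"
proof -
  define T1 where "T1 = x^3*q1 + D*(y^3*q2) - D*(z^3*q3)"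
  define T2 where "T2 = x^2*q1^2 + D*(y^2*q2^2) - D*(z^2*q3^2)"
  define T3 where "T3 = x*q1^3 + D*(y*q2^3) - D*(z*q3^3)"
  define T4 where "T4 = q1^4 + D*q2^4 - D*q3^4"
  have E: "4*s*T1 + 6*s^2*T2 + 4*s^3*T3 + s^4*T4 = 0" for s
  proof -
    have "(x+s*q1)^4 + D*(y+s*q2)^4 - D*(z+s*q3)^4 - w^4
       = (x^4 + D*y^4 - D*z^4 - w^4) + (4*s*T1 + 6*s^2*T2 + 4*s^3*T3 + s^4*T4)"
      unfolding T1_def T2_def T3_def T4_def pow4_expand by (simp add: algebra_simps)
    then show ?thesis using Fs[of s] F0 by simp
  qed
  have h1: "4*T1 + 6*T2 + 4*T3 + T4 = 0" using E[of 1] by simp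
  have h2: "-4*T1 + 6*T2 - 4*T3 + T4 = 0" using E[of "-1"] by simp
  have h3: "8*T1 + 24*T2 + 32*T3 + 16*T4 = 0" using E[of 2] by simp
  have h4: "-8*T1 + 24*T2 - 32*T3 + 16*T4 = 0" using E[of "-2"] by simp
  have "24*T4 = (8*T1 + 24*T2 + 32*T3 + 16*T4) + (-8*T1 + 24*T2 - 32*T3 + 16*T4)
      - 4*((4*T1 + 6*T2 + 4*T3 + T4) + (-4*T1 + 6*T2 - 4*T3 + T4))" by (simp add: algebra_simps)
  also have "\<dots> = 0" unfolding h1 h2 h3 h4 by simp
  finally have t4: "T4 = 0" by simp
  have "12*T2 = (4*T1 + 6*T2 + 4*T3 + T4) + (-4*T1 + 6*T2 - 4*T3 + T4) - 2*T4" by (simp add: algebra_simps)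
  also have "\<dots> = 0" unfolding h1 h2 by (simp add: t4)
  finally have t2: "T2 = 0" by simp
  have "48*T3 = (8*T1 + 24*T2 + 32*T3 + 16*T4) - (-8*T1 + 24*T2 - 32*T3 + 16*T4)
      - 2*((4*T1 + 6*T2 + 4*T3 + T4) - (-4*T1 + 6*T2 - 4*T3 + T4))" by (simp add: algebra_simps)
  also have "\<dots> = 0" unfolding h1 h2 h3 h4 by simp
  finally have t3: "T3 = 0" by simp
  have t1: "T1 = 0" using h1 t2 t3 t4 by simp
  define r1 where "r1 = q1/x"
  define r2 where "r2 = q2/y"
  define r3 where "r3 = q3/z"
  have q1: "q1 = x*r1" and q2: "q2 = y*r2" and q3: "q3 = z*r3"
    using x0 y0 z0 by (simp_all add: r1_def r2_def r3_def)
  have e1: "x^4*r1 + (D*y^4)*r2 - (D*z^4)*r3 = 0"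
    using t1 unfolding T1_def q1 q2 q3 by (simp add: algebra_simps power2_eq_square power3_eq_cube power4_eq_xxxx)
  have e2: "x^4*r1^2 + (D*y^4)*r2^2 - (D*z^4)*r3^2 = 0"
    using t2 unfolding T2_def q1 q2 q3 by (simp add: algebra_simps power2_eq_square power3_eq_cube power4_eq_xxxx)
  have e3: "x^4*r1^3 + (D*y^4)*r2^3 - (D*z^4)*r3^3 = 0"
    using t3 unfolding T3_def q1 q2 q3 by (simp add: algebra_simps power2_eq_square power3_eq_cube power4_eq_xxxx)
  have "r1 = 0 \<and> r2 = 0 \<and> r3 = 0"
    by (rule key[OF e1 e2 e3]) (use AC BC AB ABC x0 y0 z0 D0 in auto)
  then show ?thesis using q1 q2 q3 by simp
qed

lemma no_line:
  fixes d X Y Z W :: rat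
  assumes X0: "X \<noteq> 0" and Y0: "Y \<noteq> 0" and Z0: "Z \<noteq> 0" and W0: "W \<noteq> 0" and d0: "d \<noteq> 0"
    and FF: "X^4 + d^2*Y^4 - d^2*Z^4 - W^4 = 0"
    and AC: "X^4 \<noteq> d^2*Z^4" and BC: "Y^4 \<noteq> Z^4"
  shows "(X,Y,Z,W) \<notin> Omega_rat d"
proof
  assume "(X,Y,Z,W) \<in> Omega_rat d"
  then obtain u v a b where L: "line_in_F d u v" and P: "cpt (X,Y,Z,W) = lincomb4 a u b v"
    using X0 Y0 Z0 W0 unfolding Omega_rat_def by auto
  obtain u1 u2 u3 u4 where u: "u = (u1,u2,u3,u4)" by (cases u) auto
  obtain v1 v2 v3 v4 where v: "v = (v1,v2,v3,v4)" by (cases v) auto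
  have ind: "\<And>a b. lincomb4 a u b v = (0,0,0,0) \<Longrightarrow> a = 0 \<and> b = 0"
    and FL: "\<And>a b. Fform (of_rat d) (lincomb4 a u b v) = 0"
    using L unfolding line_in_F_def by blast+
  define x :: complex where "x = of_rat X"
  define y :: complex where "y = of_rat Y"
  define z :: complex where "z = of_rat Z"
  define w :: complex where "w = of_rat W"
  define D :: complex where "D = (of_rat d)^2"
  have px: "x = a*u1 + b*v1" and py: "y = a*u2 + b*v2" and pz: "z = a*u3 + b*v3" and pw: "w = a*u4 + b*v4"
    using P unfolding u v cpt_def lincomb4_def x_def y_def z_def w_def by auto
  define q1 where "q1 = u4*v1 - v4*u1"
  define q2 where "q2 = u4*v2 - v4*u2"
  define q3 where "q3 = u4*v3 - v4*u3"
  have Fs: "(x+s*q1)^4 + D*(y+s*q2)^4 - D*(z+s*q3)^4 - w^4 = 0" for s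
  proof -
    have "lincomb4 (a - s*v4) u (b + s*u4) v = (x+s*q1, y+s*q2, z+s*q3, w)"
      unfolding u v lincomb4_def px py pz pw q1_def q2_def q3_def by (simp add: algebra_simps)
    then show ?thesis using FL[of "a - s*v4" "b + s*u4"] unfolding Fform_def D_def by simp
  qed
  have x0: "x \<noteq> 0" and y0: "y \<noteq> 0" and z0: "z \<noteq> 0" and w0: "w \<noteq> 0" and D0: "D \<noteq> 0"
    using X0 Y0 Z0 W0 d0 by (simp_all add: x_def y_def z_def w_def D_def)
  have cAC: "x^4 - D*z^4 = of_rat (X^4 - d^2*Z^4)"
    by (simp add: x_def z_def D_def of_rat_diff of_rat_mult of_rat_power)
  have cBC: "y^4 - z^4 = of_rat (Y^4 - Z^4)"
    by (simp add: y_def z_def of_rat_diff of_rat_power)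
  have cAB: "x^4 + D*y^4 = of_rat (X^4 + d^2*Y^4)"
    by (simp add: x_def y_def D_def of_rat_add of_rat_mult of_rat_power)
  have cF: "x^4 + D*y^4 - D*z^4 - w^4 = of_rat (X^4 + d^2*Y^4 - d^2*Z^4 - W^4)"
    by (simp add: x_def y_def z_def w_def D_def of_rat_add of_rat_diff of_rat_mult of_rat_power)
  have pos: "X^4 + d^2*Y^4 > 0"
  proof -
    have "X^4 > 0" using X0 by (simp add: zero_less_power_eq)
    moreover have "d^2*Y^4 \<ge> 0" by simp
    ultimately show ?thesis by linarith
  qed
  have F0: "x^4 + D*y^4 - D*z^4 - w^4 = 0" using cF FF by simp
  have hAC: "x^4 \<noteq> D*z^4" using cAC AC by auto
  have hBC: "y^4 \<noteq> z^4" using cBC BC by auto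
  have hAB: "x^4 + D*y^4 \<noteq> 0" using cAB pos by auto
  have hABC: "x^4 + D*y^4 \<noteq> D*z^4"
  proof
    assume "x^4 + D*y^4 = D*z^4"
    then have "w^4 = 0" using F0 by (simp add: algebra_simps)
    then show False using w0 by simp
  qed
  have "q1 = 0 \<and> q2 = 0 \<and> q3 = 0"
    using core[OF x0 y0 z0 D0 hAC hBC hAB hABC F0 Fs] .
  then have "lincomb4 (-v4) u u4 v = (0,0,0,0)"
    unfolding u v lincomb4_def q1_def q2_def q3_def by (simp add: algebra_simps)
  then have "v4 = 0 \<and> u4 = 0" using ind by fastforce
  then have "w = 0" using pw by simp
  then show False using w0 by simp
qed

lemma nonsq:
  fixes p :: nat and a :: rat
  assumes pp: "prime p" and a0: "a \<noteq> 0" and qa: "quotient_of a = (n,m)"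
    and pn: "\<not> int p dvd n" and pm: "\<not> int p dvd m"
  shows "\<not> (\<exists>q::rat. q \<noteq> 0 \<and> (of_nat p * (of_nat p^4 + 1)) * a = q^2)"
proof
  assume "\<exists>q::rat. q \<noteq> 0 \<and> (of_nat p * (of_nat p^4 + 1)) * a = q^2"
  then obtain q :: rat where eq: "(of_nat p * (of_nat p^4 + 1)) * a = q^2" by blast
  obtain k l where qq: "quotient_of q = (k,l)" by (cases "quotient_of q") auto
  define P where "P = int p"
  have Pp: "prime P" using pp by (simp add: P_def)
  have m0: "m > 0" using quotient_of_denom_pos[OF qa] .
  have l0: "l > 0" using quotient_of_denom_pos[OF qq] .
  have cop: "coprime k l" using quotient_of_coprime[OF qq] .
  have ad: "a = of_int n / of_int m" using quotient_of_div[OF qa] .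
  have qd: "q = of_int k / of_int l" using quotient_of_div[OF qq] .
  have "(of_int P * (of_int P^4 + 1)) * (of_int n / of_int m) = (of_int k / of_int l :: rat)^2"
    using eq unfolding ad qd P_def by simp
  then have "of_int (P * (P^4 + 1) * n * l^2) = (of_int (k^2 * m) :: rat)"
    using m0 l0 by (simp add: field_simps power2_eq_square)
  then have ie: "P * (P^4 + 1) * n * l^2 = k^2 * m" by (simp only: of_int_eq_iff)
  have "P dvd k^2 * m" unfolding ie[symmetric] by simp
  then have "P dvd k" using Pp pm unfolding P_def by (simp add: prime_dvd_mult_iff prime_dvd_power_iff)
  then obtain k' where k': "k = P * k'" by (auto simp: dvd_def)
  have "P * ((P^4 + 1) * n * l^2) = P * (P * k'^2 * m)"
    using ie unfolding k' by (simp add: algebra_simps power2_eq_square)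
  moreover have "P \<noteq> 0" using Pp by auto
  ultimately have ie2: "(P^4 + 1) * n * l^2 = P * k'^2 * m" by simp
  have "P dvd (P^4 + 1) * n * l^2" unfolding ie2 by simp
  moreover have "\<not> P dvd P^4 + 1"
  proof
    assume "P dvd P^4 + 1"
    moreover have "P dvd P^4" by simp
    ultimately have "P dvd 1" using dvd_add_right_iff by blast
    then show False using Pp by auto
  qed
  ultimately have "P dvd l" using Pp pn unfolding P_def by (simp add: prime_dvd_mult_iff prime_dvd_power_iff)
  moreover have "P dvd k" using k' by simp
  ultimately have "P dvd 1" using cop by (meson coprime_common_divisor)
  then show False using Pp by auto
qed

lemma point_good:
  fixes p :: nat
  assumes pp: "prime p"
  defines "t \<equiv> (of_nat p :: rat)"
  shows "(t^4 + 2*t^2 - 1, 2, 2*t, t^4 - 2*t^2 - 1) \<in> F_rat (t*(t^4+1))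
       \<and> (t^4 + 2*t^2 - 1, 2, 2*t, t^4 - 2*t^2 - 1) \<notin> Omega_rat (t*(t^4+1))"
proof -
  define X where "X = t^4 + 2*t^2 - 1"
  define W where "W = t^4 - 2*t^2 - 1"
  define d where "d = t*(t^4+1)"
  have p2: "p \<ge> 2" using pp by (simp add: prime_ge_2_nat)
  have t2: "t \<ge> 2" unfolding t_def using p2 by simp
  have tsq: "t^2 \<ge> 4"
  proof -
    have "t^2 \<ge> 2^2" using t2 by (intro power_mono) auto
    then show ?thesis by simp
  qed
  have t4: "t^4 \<ge> 4*t^2"
  proof -
    have "t^4 = t^2 * t^2" by (simp add: power2_eq_square power4_eq_xxxx)
    also have "\<dots> \<ge> 4 * t^2" using tsq by (intro mult_right_mono) auto
    finally show ?thesis .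
  qed
  have X0: "X > 0" unfolding X_def using tsq t4 by linarith
  have W0: "W > 0" unfolding W_def using tsq t4 by linarith
  have d0: "d > 0" unfolding d_def using t2 by (simp add: add_pos_nonneg)
  have FF: "X^4 + d^2*2^4 - d^2*(2*t)^4 - W^4 = 0"
    unfolding X_def W_def d_def by algebra
  have BC: "(2::rat)^4 \<noteq> (2*t)^4"
  proof -
    have "(2*t)^4 = 16 * t^4" by simp
    also have "\<dots> \<ge> 16*(4*4)" using t4 tsq by linarith
    finally show ?thesis by auto
  qed
  define P where "P = int p"
  define H where "H = P^7 - 4*P^6 + 4*P^5 + 2*P^3 - 4*P^2 - 4*P"
  have XdZ: "X^2 - d*(2*t)^2 = of_int (P*H + 1)"
  proof -
    have "X^2 - d*(2*t)^2 = t*(t^7 - 4*t^6 + 4*t^5 + 2*t^3 - 4*t^2 - 4*t) + 1"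
      unfolding X_def d_def by algebra
    also have "\<dots> = of_int (P*H + 1)"
      unfolding t_def H_def P_def by simp
    finally show ?thesis .
  qed
  have PH: "P*H + 1 \<noteq> 0"
  proof
    assume "P*H + 1 = 0"
    then have "P * (-H) = 1" by (simp add: algebra_simps)
    then have "P dvd 1" by (metis dvd_triv_left)
    then show False using pp unfolding P_def by auto
  qed
  have AC: "X^4 \<noteq> d^2*(2*t)^4"
  proof
    assume h: "X^4 = d^2*(2*t)^4"
    have "X^4 - d^2*(2*t)^4 = (X^2 - d*(2*t)^2) * (X^2 + d*(2*t)^2)"
      by (simp add: algebra_simps power2_eq_square power4_eq_xxxx)
    moreover have "X^2 + d*(2*t)^2 > 0" using X0 d0 t2 by (simp add: add_pos_pos)
    moreover have "X^2 - d*(2*t)^2 \<noteq> 0" unfolding XdZ using PH by (simp only: of_int_eq_0_iff not_False_eq_True)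
    ultimately have "X^4 - d^2*(2*t)^4 \<noteq> 0" by simp
    with h show False by simp
  qed
  have nl: "(X, 2, 2*t, W) \<notin> Omega_rat d"
    by (rule no_line) (use X0 W0 d0 t2 FF AC BC in auto)
  have "(X, 2, 2*t, W) \<in> F_rat d"
    unfolding F_rat_def Fform_def using FF by simp
  with nl show ?thesis unfolding X_def W_def d_def by simp
qed

theorem lemma5p5:
  fixes as :: "rat list"
  assumes "\<forall>a\<in>set as. a \<noteq> 0"
  shows "\<exists>d::rat. d \<noteq> 0 \<and> \<not> (F_rat d \<subseteq> Omega_rat d) \<and>
           (\<forall>a\<in>set as. \<not> (\<exists>q::rat. q \<noteq> 0 \<and> d * a = q^2))"
proof -
  define f where "f = (\<lambda>a::rat. nat \<bar>fst (quotient_of a)\<bar> + nat (snd (quotient_of a)))"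
  define B where "B = (\<Sum>a\<in>set as. f a)"
  obtain p where pp: "prime p" and pB: "p > B" using bigger_prime by blast
  define t where "t = (of_nat p :: rat)"
  define d where "d = t*(t^4+1)"
  have good: "(t^4 + 2*t^2 - 1, 2, 2*t, t^4 - 2*t^2 - 1) \<in> F_rat d
       \<and> (t^4 + 2*t^2 - 1, 2, 2*t, t^4 - 2*t^2 - 1) \<notin> Omega_rat d"
    using point_good[OF pp] unfolding t_def d_def .
  have t2: "t \<ge> 2" unfolding t_def using pp by (simp add: prime_ge_2_nat)
  have "t^4 + 1 > 0" by (simp add: add_nonneg_pos)
  then have d0: "d \<noteq> 0" unfolding d_def using t2 by simp
  have sq: "\<not> (\<exists>q::rat. q \<noteq> 0 \<and> d * a = q^2)" if a: "a \<in> set as" for a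
  proof -
    obtain n m where qa: "quotient_of a = (n,m)" by (cases "quotient_of a") auto
    have a0: "a \<noteq> 0" using assms a by auto
    have n0: "n \<noteq> 0"
    proof
      assume "n = 0"
      then have "a = 0" using quotient_of_div[OF qa] by simp
      with a0 show False by simp
    qed
    have m0: "m > 0" using quotient_of_denom_pos[OF qa] .
    have "f a \<le> B" unfolding B_def using a by (intro member_le_sum) auto
    then have fa: "f a < p" using pB by linarith
    have fa': "nat \<bar>n\<bar> + nat m < p" using fa qa unfolding f_def by simp
    have nl: "\<bar>n\<bar> < int p" using fa' by linarith
    have ml: "m < int p" using fa' m0 by linarith
    have pn: "\<not> int p dvd n"
    proof
      assume "int p dvd n"
      then have "int p \<le> \<bar>n\<bar>" using dvd_imp_le_int[OF n0] by fastforce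
      with nl show False by simp
    qed
    have pm: "\<not> int p dvd m"
    proof
      assume "int p dvd m"
      then have "int p \<le> m" using m0 by (rule zdvd_imp_le)
      with ml show False by simp
    qed
    have "d = of_nat p * (of_nat p^4 + 1)" unfolding d_def t_def by simp
    then show ?thesis using nonsq[OF pp a0 qa pn pm] by simp
  qed
  have "\<not> (F_rat d \<subseteq> Omega_rat d)" using good by blast
  then show ?thesis using d0 sq by blast
qed

end
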